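(* Let $(\Lambda,Y)$ be an extensible graph with parameters $(t,s,\bar s)$ with $t=1$, let $y\in Y$, $Y_1=\Lambda(y,1)$, $Y_2=\Lambda(y,2)$, and $\Lambda_1,\Lambda_2$ the graphs induced on $Y_1,Y_2$. Write the edges of $\Lambda_1$ (which partition $Y_1$) as $\{a'_i,a''_i\}$, $1\le i\le s$, and let $A'_i,A''_i$ be the sets of points of $Y_2$ adjacent to $a'_i$, $a''_i$ respectively. Let $D_i$ be the set of edges of $\Lambda_2$ contained in $A'_i$ or in $A''_i$ (it is a partition of $Y_2$), and let $t_i$ be the permutation of $Y_2$ with $t_i(u)=v$ iff $\{u,v\}\in D_i$. Then: (a) The group $T$ of permutations of $Y_2$ generated by $t_1,\dots,t_s$ is an elementary abelian $2$-group acting regularly on $Y_2$. (b) The rank $r$ of $T$ satisfies $r\ge s-1$, and if $r=s-1$ then $t_s=t_1\circ\cdots\circ t_{s-1}$. (c) $(t,s,\bar s)\in\{(1,1,0),(1,2,2),(1,3,4),(1,5,8)\}$.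
   Context: A finite simple graph $(\Lambda,Y)$ is extensible with parameters $(t,s,\bar s)$ (nonnegative integers) if: (1) $\Lambda$ has diameter $2$; (2) for every $y\in Y$, with $\Lambda(y,d)$ the set of vertices at distance $d$ from $y$: (a) $|\Lambda(y,1)|=2s$; (b) $|\Lambda(y,2)|=2\bar s$; (c) every $z\in\Lambda(y,1)$ is adjacent to exactly $\bar s$ points of $\Lambda(y,2)$ and exactly $t=2s-\bar s-1$ points of $\Lambda(y,1)$; (d) every $z\in\Lambda(y,2)$ is adjacent to exactly $s$ points of $\Lambda(y,2)$ and exactly $s$ points of $\Lambda(y,1)$; (3) every edge lies in exactly $t$ triangles; (4) $|Y|=1+2s+2\bar s$. The rank of an elementary abelian $2$-group is its dimension as an $\mathbb{F}_2$-vector space. *)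

theory Defs
  imports "HOL-Algebra.Algebra"
begin

definition simple_graph :: "'a set \<Rightarrow> ('a \<Rightarrow> 'a \<Rightarrow> bool) \<Rightarrow> bool" where
  "simple_graph Y E \<longleftrightarrow> finite Y \<and> (\<forall>x z. E x z \<longrightarrow> x \<in> Y \<and> z \<in> Y)
     \<and> (\<forall>x. \<not> E x x) \<and> (\<forall>x z. E x z \<longrightarrow> E z x)"

definition nbhd1 :: "'a set \<Rightarrow> ('a \<Rightarrow> 'a \<Rightarrow> bool) \<Rightarrow> 'a \<Rightarrow> 'a set" where
  "nbhd1 Y E y = {z \<in> Y. E y z}"

definition nbhd2 :: "'a set \<Rightarrow> ('a \<Rightarrow> 'a \<Rightarrow> bool) \<Rightarrow> 'a \<Rightarrow> 'a set" where
  "nbhd2 Y E y = {z \<in> Y. z \<noteq> y \<and> \<not> E y z \<and> (\<exists>w \<in> Y. E y w \<and> E w z)}"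

definition diam_le2 :: "'a set \<Rightarrow> ('a \<Rightarrow> 'a \<Rightarrow> bool) \<Rightarrow> bool" where
  "diam_le2 Y E \<longleftrightarrow> (\<forall>x \<in> Y. \<forall>z \<in> Y. x = z \<or> E x z \<or> (\<exists>w \<in> Y. E x w \<and> E w z))"

definition extensible :: "'a set \<Rightarrow> ('a \<Rightarrow> 'a \<Rightarrow> bool) \<Rightarrow> nat \<Rightarrow> nat \<Rightarrow> nat \<Rightarrow> bool" where
  "extensible Y E t s sb \<longleftrightarrow>
     simple_graph Y E \<and>
     int t = 2 * int s - int sb - 1 \<and>
     diam_le2 Y E \<and>
     (\<forall>y \<in> Y.
        card (nbhd1 Y E y) = 2 * s \<and>
        card (nbhd2 Y E y) = 2 * sb \<and>
        (\<forall>z \<in> nbhd1 Y E y. card {w \<in> nbhd2 Y E y. E z w} = sb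
                         \<and> card {w \<in> nbhd1 Y E y. E z w} = t) \<and>
        (\<forall>z \<in> nbhd2 Y E y. card {w \<in> nbhd2 Y E y. E z w} = s
                         \<and> card {w \<in> nbhd1 Y E y. E z w} = s)) \<and>
     (\<forall>x z. E x z \<longrightarrow> card {w \<in> Y. E x w \<and> E z w} = t) \<and>
     card Y = 1 + 2 * s + 2 * sb"

definition induced_edges :: "'a set \<Rightarrow> ('a \<Rightarrow> 'a \<Rightarrow> bool) \<Rightarrow> 'a set set" where
  "induced_edges S E = {{u, v} | u v. u \<in> S \<and> v \<in> S \<and> E u v}"

definition adjY2 :: "'a set \<Rightarrow> ('a \<Rightarrow> 'a \<Rightarrow> bool) \<Rightarrow> 'a \<Rightarrow> 'a \<Rightarrow> 'a set" where
  "adjY2 Y E y a = {u \<in> nbhd2 Y E y. E a u}"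

definition Dset :: "'a set \<Rightarrow> ('a \<Rightarrow> 'a \<Rightarrow> bool) \<Rightarrow> 'a \<Rightarrow> 'a \<Rightarrow> 'a \<Rightarrow> 'a set set" where
  "Dset Y E y a1 a2 = {e \<in> induced_edges (nbhd2 Y E y) E.
       e \<subseteq> adjY2 Y E y a1 \<or> e \<subseteq> adjY2 Y E y a2}"

text \<open>t_i: the permutation of Y_2 with t_i(u) = v iff {u,v} in D_i
  (as an element of BijGroup Y_2, i.e. extensional outside Y_2).\<close>
definition tperm :: "'a set \<Rightarrow> ('a \<Rightarrow> 'a \<Rightarrow> bool) \<Rightarrow> 'a \<Rightarrow> 'a \<Rightarrow> 'a \<Rightarrow> 'a \<Rightarrow> 'a" where
  "tperm Y E y a1 a2 = (\<lambda>u \<in> nbhd2 Y E y. THE v. {u, v} \<in> Dset Y E y a1 a2)"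

text \<open>Rank of an elementary abelian 2-group (dimension over F_2) = the
  minimal size of a generating (= F_2-spanning) set.\<close>
definition group_rank :: "('a, 'b) monoid_scheme \<Rightarrow> nat" where
  "group_rank G = (LEAST n. \<exists>S. S \<subseteq> carrier G \<and> finite S \<and> card S = n
                                 \<and> generate G S = carrier G)"

end

theory Submission
  imports Defs
begin


lemma (in group) inv_self: "x \<in> carrier G \<Longrightarrow> x \<otimes> x = \<one> \<Longrightarrow> inv x = x"
  by (rule inv_equality) auto

lemma (in group) gen_comm1:
  assumes XX: "XX \<subseteq> carrier G" and cX: "\<And>a b. a \<in> XX \<Longrightarrow> b \<in> XX \<Longrightarrow> a \<otimes> b = b \<otimes> a"
    and sX: "\<And>a. a \<in> XX \<Longrightarrow> a \<otimes> a = \<one>" and a: "a \<in> XX" and g: "g \<in> generate G XX"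
  shows "a \<otimes> g = g \<otimes> a"
  using g
proof (induction rule: generate.induct)
  case one then show ?case using a XX by auto
next
  case (incl h) then show ?case using cX a by auto
next
  case (inv h) then have "inv h = h" using inv_self sX XX by auto
  then show ?case using cX a inv by auto
next
  case (eng h1 h2)
  have c: "h1 \<in> carrier G" "h2 \<in> carrier G" "a \<in> carrier G"
    using generate_in_carrier[OF XX] eng a XX by auto
  have "a \<otimes> (h1 \<otimes> h2) = (a \<otimes> h1) \<otimes> h2" using c by (simp add: m_assoc)
  also have "\<dots> = h1 \<otimes> (a \<otimes> h2)" using c eng by (simp add: m_assoc)
  also have "\<dots> = (h1 \<otimes> h2) \<otimes> a" using c eng by (simp add: m_assoc)
  finally show ?case .
qed

lemma (in group) gen_comm:
  assumes XX: "XX \<subseteq> carrier G" and cX: "\<And>a b. a \<in> XX \<Longrightarrow> b \<in> XX \<Longrightarrow> a \<otimes> b = b \<otimes> a"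
    and sX: "\<And>a. a \<in> XX \<Longrightarrow> a \<otimes> a = \<one>" and g: "g \<in> generate G XX" and h: "h \<in> generate G XX"
  shows "g \<otimes> h = h \<otimes> g"
  using h
proof (induction rule: generate.induct)
  case one then show ?case using generate_in_carrier[OF XX g] by auto
next
  case (incl a) then show ?case using gen_comm1[OF XX cX sX _ g] by auto
next
  case (inv a) then have "inv a = a" using inv_self sX XX by auto
  then show ?case using gen_comm1[OF XX cX sX _ g] inv by auto
next
  case (eng h1 h2)
  have c: "h1 \<in> carrier G" "h2 \<in> carrier G" "g \<in> carrier G"
    using generate_in_carrier[OF XX] eng g by auto
  have "g \<otimes> (h1 \<otimes> h2) = (g \<otimes> h1) \<otimes> h2" using c by (simp add: m_assoc)
  also have "\<dots> = h1 \<otimes> (g \<otimes> h2)" using c eng by (simp add: m_assoc)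
  also have "\<dots> = (h1 \<otimes> h2) \<otimes> g" using c eng by (simp add: m_assoc)
  finally show ?case .
qed

lemma (in group) gen_sq:
  assumes XX: "XX \<subseteq> carrier G" and cX: "\<And>a b. a \<in> XX \<Longrightarrow> b \<in> XX \<Longrightarrow> a \<otimes> b = b \<otimes> a"
    and sX: "\<And>a. a \<in> XX \<Longrightarrow> a \<otimes> a = \<one>" and g: "g \<in> generate G XX"
  shows "g \<otimes> g = \<one>"
  using g
proof (induction rule: generate.induct)
  case one then show ?case by simp
next
  case (incl h) then show ?case using sX by auto
next
  case (inv h) then have "inv h = h" using inv_self sX XX by auto
  then show ?case using sX inv by auto
next
  case (eng h1 h2)
  have c: "h1 \<in> carrier G" "h2 \<in> carrier G"
    using generate_in_carrier[OF XX] eng by auto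
  have "(h1 \<otimes> h2) \<otimes> (h1 \<otimes> h2) = h1 \<otimes> (h2 \<otimes> h1) \<otimes> h2" using c by (simp add: m_assoc)
  also have "\<dots> = h1 \<otimes> (h1 \<otimes> h2) \<otimes> h2" using gen_comm[OF XX cX sX eng(1,2)] by simp
  also have "\<dots> = (h1 \<otimes> h1) \<otimes> (h2 \<otimes> h2)" using c by (simp add: m_assoc)
  also have "\<dots> = \<one>" using eng c by simp
  finally show ?case .
qed

lemma (in comm_group) gen_card:
  assumes sq: "\<And>x. x \<in> carrier G \<Longrightarrow> x \<otimes> x = \<one>" and fS: "finite S" and S: "S \<subseteq> carrier G"
  shows "finite (generate G S) \<and> card (generate G S) \<le> 2 ^ card S"
  using fS S
proof (induction S rule: finite_induct)
  case empty then show ?case by (simp add: generate_empty)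
next
  case (insert x F)
  let ?A = "generate G F"
  have x: "x \<in> carrier G" using insert by auto
  have Acar: "?A \<subseteq> carrier G" using generate_incl insert by auto
  have sub: "generate G (insert x F) \<subseteq> ?A \<union> (\<lambda>g. x \<otimes> g) ` ?A"
  proof
    fix h assume "h \<in> generate G (insert x F)"
    then show "h \<in> ?A \<union> (\<lambda>g. x \<otimes> g) ` ?A"
    proof (induction rule: generate.induct)
      case one then show ?case by (simp add: generate.one)
    next
      case (incl h)
      show ?case
      proof (cases "h = x")
        case True
        then have "h = x \<otimes> \<one>" using x by simp
        then show ?thesis using generate.one[of G F] by blast
      next
        case False then show ?thesis using incl generate.incl[of h F G] by auto
      qed
    next
      case (inv h)
      have hc: "h \<in> carrier G" using inv insert by auto
      then have ih: "inv h = h" using inv_self sq by auto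
      show ?case
      proof (cases "h = x")
        case True
        then have "inv h = x \<otimes> \<one>" using x ih by simp
        then show ?thesis using generate.one[of G F] by blast
      next
        case False then show ?thesis using inv ih generate.incl[of h F G] by auto
      qed
    next
      case (eng h1 h2)
      from eng.IH(1) show ?case
      proof
        assume h1: "h1 \<in> ?A"
        from eng.IH(2) show ?case
        proof
          assume h2: "h2 \<in> ?A"
          then show ?case using generate.eng[OF h1 h2] by blast
        next
          assume "h2 \<in> (\<lambda>g. x \<otimes> g) ` ?A"
          then obtain b where b: "b \<in> ?A" "h2 = x \<otimes> b" by blast
          have "h1 \<in> carrier G" "b \<in> carrier G" using b h1 Acar by auto
          then have "h1 \<otimes> h2 = x \<otimes> (h1 \<otimes> b)" using b x by (simp add: m_lcomm)
          then show ?case using generate.eng[OF h1 b(1)] by blast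
        qed
      next
        assume "h1 \<in> (\<lambda>g. x \<otimes> g) ` ?A"
        then obtain a where a: "a \<in> ?A" "h1 = x \<otimes> a" by blast
        from eng.IH(2) show ?case
        proof
          assume h2: "h2 \<in> ?A"
          have "a \<in> carrier G" "h2 \<in> carrier G" using a h2 Acar by auto
          then have "h1 \<otimes> h2 = x \<otimes> (a \<otimes> h2)" using a x by (simp add: m_assoc)
          then show ?case using generate.eng[OF a(1) h2] by blast
        next
          assume "h2 \<in> (\<lambda>g. x \<otimes> g) ` ?A"
          then obtain b where b: "b \<in> ?A" "h2 = x \<otimes> b" by blast
          have ac: "a \<in> carrier G" "b \<in> carrier G" using a b Acar by auto
          have "h1 \<otimes> h2 = (x \<otimes> x) \<otimes> (a \<otimes> b)" using a b ac x by (simp add: m_ac)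
          also have "\<dots> = a \<otimes> b" using sq[OF x] ac by simp
          finally have "h1 \<otimes> h2 = a \<otimes> b" .
          then show ?case using generate.eng[OF a(1) b(1)] by simp
        qed
      qed
    qed
  qed
  have fA: "finite ?A" and cA: "card ?A \<le> 2 ^ card F" using insert by auto
  have "finite (?A \<union> (\<lambda>g. x \<otimes> g) ` ?A)" using fA by simp
  moreover have "card (?A \<union> (\<lambda>g. x \<otimes> g) ` ?A) \<le> card ?A + card ?A"
    using card_Un_le[of ?A "(\<lambda>g. x \<otimes> g) ` ?A"] card_image_le[OF fA, of "\<lambda>g. x \<otimes> g"] by linarith
  ultimately have "finite (generate G (insert x F)) \<and> card (generate G (insert x F)) \<le> 2 * card ?A"
    using sub card_mono[OF _ sub] finite_subset[OF sub] by auto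
  then show ?case using cA insert by auto
qed





locale EG =
  fixes Y :: "'a set" and E :: "'a \<Rightarrow> 'a \<Rightarrow> bool" and t s sb :: nat
    and y :: 'a and a1 a2 :: "nat \<Rightarrow> 'a"
  assumes ext: "extensible Y E t s sb"
    and t1: "t = 1"
    and yY: "y \<in> Y"
    and lab: "induced_edges (nbhd1 Y E y) E = {{a1 i, a2 i} | i. i \<in> {1..s}}"
    and lab_inj: "inj_on (\<lambda>i. {a1 i, a2 i}) {1..s}"
begin

lemma card1_eq: "card S = 1 \<Longrightarrow> w \<in> S \<Longrightarrow> w' \<in> S \<Longrightarrow> w = w'"
  by (metis card_1_singletonE singletonD)

abbreviation "Y1 \<equiv> nbhd1 Y E y"
abbreviation "Y2 \<equiv> nbhd2 Y E y"

lemma finY: "finite Y" using ext by (simp add: extensible_def simple_graph_def)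
lemma EY: "E x z \<Longrightarrow> x \<in> Y \<and> z \<in> Y" using ext by (simp add: extensible_def simple_graph_def)
lemma irr: "\<not> E x x" using ext by (simp add: extensible_def simple_graph_def)
lemma sym: "E x z \<Longrightarrow> E z x" using ext by (simp add: extensible_def simple_graph_def)
lemma diam: "diam_le2 Y E" using ext by (simp add: extensible_def)
lemma sb_eq: "sb = 2*s - 2" "s \<ge> 1" using ext t1 by (auto simp add: extensible_def)
lemma cardY2: "card Y2 = 2 * sb" using ext yY by (simp add: extensible_def)
lemma tri: "E x z \<Longrightarrow> card {w \<in> Y. E x w \<and> E z w} = 1"
  using ext t1 by (simp add: extensible_def)
lemma tri_unique: "E x z \<Longrightarrow> w \<in> Y \<Longrightarrow> E x w \<Longrightarrow> E z w \<Longrightarrow> w' \<in> Y \<Longrightarrow> E x w' \<Longrightarrow> E z w' \<Longrightarrow> w = w'"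
proof -
  assume "E x z" "w \<in> Y" "E x w" "E z w" "w' \<in> Y" "E x w'" "E z w'"
  then have "card {w \<in> Y. E x w \<and> E z w} = 1" by (simp add: tri)
  thus ?thesis by (rule card1_eq) (use \<open>w \<in> Y\<close> \<open>E x w\<close> \<open>E z w\<close> \<open>w' \<in> Y\<close> \<open>E x w'\<close> \<open>E z w'\<close> in auto)
qed
lemma tri_ex: "E x z \<Longrightarrow> \<exists>w\<in>Y. E x w \<and> E z w"
proof -
  assume "E x z"
  then have "card {w \<in> Y. E x w \<and> E z w} = 1" by (simp add: tri)
  then obtain a where "{w \<in> Y. E x w \<and> E z w} = {a}" by (meson card_1_singletonE)
  thus ?thesis by blast
qed

lemma Y1_card1: "z \<in> Y1 \<Longrightarrow> card {w \<in> Y1. E z w} = 1"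
  using ext t1 yY by (simp add: extensible_def)
lemma Y1_unique: "z \<in> Y1 \<Longrightarrow> w \<in> Y1 \<Longrightarrow> E z w \<Longrightarrow> w' \<in> Y1 \<Longrightarrow> E z w' \<Longrightarrow> w = w'"
proof -
  assume a: "z \<in> Y1" "w \<in> Y1" "E z w" "w' \<in> Y1" "E z w'"
  then have "card {w \<in> Y1. E z w} = 1" using Y1_card1 by blast
  thus ?thesis by (rule card1_eq) (use a in auto)
qed
lemma Y1_ex: "z \<in> Y1 \<Longrightarrow> \<exists>w\<in>Y1. E z w"
proof -
  assume a: "z \<in> Y1"
  then obtain b where "{w \<in> Y1. E z w} = {b}" using Y1_card1 by (meson card_1_singletonE)
  thus ?thesis by blast
qed

lemma Y2_nbr: "u \<in> Y2 \<Longrightarrow> card {w \<in> Y2. E u w} = s" 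
  using ext yY by (simp add: extensible_def)
lemma Y2_nbr1: "u \<in> Y2 \<Longrightarrow> card {w \<in> Y1. E u w} = s" 
  using ext yY by (simp add: extensible_def)
lemma mu: "x \<in> Y \<Longrightarrow> w \<in> nbhd2 Y E x \<Longrightarrow> card {z \<in> nbhd1 Y E x. E w z} = s"
  using ext by (simp add: extensible_def)

lemma y_notin: "y \<notin> Y1" "y \<notin> Y2" by (auto simp: nbhd1_def nbhd2_def irr)
lemma Y12: "u \<in> Y1 \<Longrightarrow> u \<notin> Y2" by (auto simp: nbhd1_def nbhd2_def)
lemma Y1D: "u \<in> Y1 \<Longrightarrow> u \<in> Y \<and> E y u" by (auto simp: nbhd1_def)
lemma Y2D: "u \<in> Y2 \<Longrightarrow> u \<in> Y \<and> \<not> E y u \<and> u \<noteq> y" by (auto simp: nbhd2_def)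
lemma classify: "w \<in> Y \<Longrightarrow> w = y \<or> w \<in> Y1 \<or> w \<in> Y2"
  using diam yY unfolding diam_le2_def nbhd1_def nbhd2_def by auto

lemma pair: "i \<in> {1..s} \<Longrightarrow> a1 i \<in> Y1 \<and> a2 i \<in> Y1 \<and> E (a1 i) (a2 i) \<and> a1 i \<noteq> a2 i"
proof -
  assume "i \<in> {1..s}"
  then have "{a1 i, a2 i} \<in> induced_edges Y1 E" using lab by blast
  then obtain u v where uv: "{a1 i, a2 i} = {u,v}" "u \<in> Y1" "v \<in> Y1" "E u v"
    unfolding induced_edges_def by blast
  then have "u \<noteq> v" using irr by auto
  thus ?thesis using uv sym by (auto simp: doubleton_eq_iff)
qed

lemma Y1_cover: "z \<in> Y1 \<Longrightarrow> \<exists>i\<in>{1..s}. z = a1 i \<or> z = a2 i"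
proof -
  assume z: "z \<in> Y1"
  then obtain w where "w \<in> Y1" "E z w" using Y1_ex by blast
  then have "{z,w} \<in> induced_edges Y1 E" using z unfolding induced_edges_def by blast
  then obtain i where "i \<in> {1..s}" "{z,w} = {a1 i, a2 i}" using lab by auto
  thus ?thesis by (auto simp: doubleton_eq_iff)
qed

lemma pair_eq: "i \<in> {1..s} \<Longrightarrow> j \<in> {1..s} \<Longrightarrow> {a1 i, a2 i} = {a1 j, a2 j} \<Longrightarrow> i = j"
  using lab_inj unfolding inj_on_def by blast

lemma disj: assumes i: "i \<in> {1..s}" and j: "j \<in> {1..s}" and ij: "i \<noteq> j"
  shows "a1 i \<noteq> a1 j" "a1 i \<noteq> a2 j" "a2 i \<noteq> a1 j" "a2 i \<noteq> a2 j"
proof -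
  note pi = pair[OF i] and pj = pair[OF j]
  show "a1 i \<noteq> a1 j"
  proof
    assume e: "a1 i = a1 j"
    then have "a2 i = a2 j" using Y1_unique[of "a1 i" "a2 i" "a2 j"] pi pj by auto
    thus False using pair_eq[OF i j] e ij by auto
  qed
  show "a1 i \<noteq> a2 j"
  proof
    assume e: "a1 i = a2 j"
    then have "a2 i = a1 j" using Y1_unique[of "a1 i" "a2 i" "a1 j"] pi pj sym by auto
    thus False using pair_eq[OF i j] e ij by auto
  qed
  show "a2 i \<noteq> a1 j"
  proof
    assume e: "a2 i = a1 j"
    then have "a1 i = a2 j" using Y1_unique[of "a2 i" "a1 i" "a2 j"] pi pj sym by auto
    thus False using pair_eq[OF i j] e ij by auto
  qed
  show "a2 i \<noteq> a2 j"
  proof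
    assume e: "a2 i = a2 j"
    then have "a1 i = a1 j" using Y1_unique[of "a2 i" "a1 i" "a1 j"] pi pj sym by auto
    thus False using pair_eq[OF i j] e ij by auto
  qed
qed

lemma a1_nbr: "i \<in> {1..s} \<Longrightarrow> w \<in> Y1 \<Longrightarrow> E (a1 i) w \<Longrightarrow> w = a2 i"
  using Y1_unique pair by blast
lemma a2_nbr: "i \<in> {1..s} \<Longrightarrow> w \<in> Y1 \<Longrightarrow> E (a2 i) w \<Longrightarrow> w = a1 i"
  using Y1_unique pair sym by blast

lemma not_both: assumes u: "u \<in> Y2" and i: "i \<in> {1..s}"
  shows "\<not> (E (a1 i) u \<and> E (a2 i) u)"
proof
  assume "E (a1 i) u \<and> E (a2 i) u"
  moreover have "E (a1 i) y" "E (a2 i) y" using pair[OF i] sym by (auto simp: nbhd1_def)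
  ultimately have "y = u" using tri_unique[of "a1 i" "a2 i" y u] pair[OF i] yY Y2D[OF u] by blast
  thus False using u y_notin by auto
qed

lemma one_of: assumes u: "u \<in> Y2" and i: "i \<in> {1..s}"
  shows "E (a1 i) u \<or> E (a2 i) u"
proof -
  define I where "I = {i \<in> {1..s}. E (a1 i) u \<or> E (a2 i) u}"
  define cf where "cf i = (if E (a1 i) u then a1 i else a2 i)" for i
  have sub: "{w \<in> Y1. E u w} \<subseteq> cf ` I"
  proof
    fix w assume w: "w \<in> {w \<in> Y1. E u w}"
    then obtain j where j: "j \<in> {1..s}" "w = a1 j \<or> w = a2 j" using Y1_cover by blast
    have "E w u" using w sym[of u w] by auto
    then have "j \<in> I" using j unfolding I_def by auto
    moreover have "cf j = w" using j \<open>E w u\<close> not_both[OF u j(1)] unfolding cf_def by auto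
    ultimately show "w \<in> cf ` I" by blast
  qed
  have fI: "finite I" unfolding I_def by auto
  have "s = card {w \<in> Y1. E u w}" using Y2_nbr1[OF u] by simp
  also have "\<dots> \<le> card (cf ` I)" using sub fI by (intro card_mono) auto
  also have "\<dots> \<le> card I" using fI card_image_le by blast
  finally have "s \<le> card I" .
  moreover have "I \<subseteq> {1..s}" unfolding I_def by auto
  ultimately have "I = {1..s}" by (intro card_seteq) simp_all
  hence "i \<in> I" using i by simp
  thus ?thesis by (simp add: I_def)
qed

definition c where "c u i = (if E (a1 i) u then a1 i else a2 i)"
definition cb where "cb u i = (if E (a1 i) u then a2 i else a1 i)"

lemma c_props: assumes u: "u \<in> Y2" and i: "i \<in> {1..s}"
  shows "E (c u i) u" "\<not> E (cb u i) u" "c u i \<in> Y1" "cb u i \<in> Y1" "E (c u i) (cb u i)"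
    "w \<in> Y1 \<Longrightarrow> E (c u i) w \<Longrightarrow> w = cb u i"
proof -
  note p = pair[OF i]
  show "E (c u i) u" using one_of[OF u i] unfolding c_def by auto
  show "\<not> E (cb u i) u" using not_both[OF u i] by (simp add: cb_def)
  show "c u i \<in> Y1" using p by (simp add: c_def)
  show "cb u i \<in> Y1" using p by (simp add: cb_def)
  show "E (c u i) (cb u i)" using p sym[of "a1 i" "a2 i"] by (simp add: c_def cb_def)
  show "w \<in> Y1 \<Longrightarrow> E (c u i) w \<Longrightarrow> w = cb u i"
    using a1_nbr[OF i, of w] a2_nbr[OF i, of w] by (simp add: c_def cb_def split: if_splits)
qed

lemma c_inj: assumes u: "u \<in> Y2" and i: "i \<in> {1..s}" and j: "j \<in> {1..s}" and ij: "i \<noteq> j"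
  shows "c u i \<noteq> c u j"
  using disj[OF i j ij] unfolding c_def by auto

lemma c_inj_on: "u \<in> Y2 \<Longrightarrow> inj_on (c u) {1..s}"
  unfolding inj_on_def using c_inj by blast

lemma Y1_nbr_c: assumes u: "u \<in> Y2" and w: "w \<in> Y1" "E u w"
  shows "\<exists>m\<in>{1..s}. w = c u m"
proof -
  obtain m where m: "m \<in> {1..s}" "w = a1 m \<or> w = a2 m" using Y1_cover w by blast
  have "E w u" using w sym[of u w] by auto
  then have "w = c u m" using m not_both[OF u m(1)] unfolding c_def by auto
  thus ?thesis using m by blast
qed

lemma c_same: assumes u: "u \<in> Y2" and v: "v \<in> Y2" and i: "i \<in> {1..s}"
  shows "E (c u i) v \<longleftrightarrow> (E (a1 i) v \<longleftrightarrow> E (a1 i) u)"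
  using one_of[OF u i] not_both[OF u i] one_of[OF v i] not_both[OF v i]
  unfolding c_def by auto

lemma c_eq: assumes u: "u \<in> Y2" and v: "v \<in> Y2" and i: "i \<in> {1..s}"
  shows "c u i = c v i \<longleftrightarrow> (E (a1 i) v \<longleftrightarrow> E (a1 i) u)"
  using pair[OF i] unfolding c_def by auto

lemma cn_Y2: assumes u: "u \<in> Y2" and i: "i \<in> {1..s}" and w: "w \<in> Y" "E (c u i) w" "E u w"
  shows "w \<in> Y2"
proof -
  have "w \<noteq> y" using w Y2D[OF u] sym[of u w] by auto
  moreover have "w \<notin> Y1"
  proof
    assume "w \<in> Y1"
    then have "w = cb u i" using c_props(6)[OF u i] w by auto
    thus False using c_props(2)[OF u i] w sym[of u w] by auto
  qed
  ultimately show ?thesis using classify[OF w(1)] by auto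
qed

lemma Dset_iff: assumes u: "u \<in> Y2" and i: "i \<in> {1..s}"
  shows "{u, v} \<in> Dset Y E y (a1 i) (a2 i) \<longleftrightarrow> (v \<in> Y2 \<and> E u v \<and> E (c u i) v)"
proof
  assume "{u, v} \<in> Dset Y E y (a1 i) (a2 i)"
  then obtain p q where pq: "{u,v} = {p,q}" "p \<in> Y2" "q \<in> Y2" "E p q"
    and sub: "{u,v} \<subseteq> adjY2 Y E y (a1 i) \<or> {u,v} \<subseteq> adjY2 Y E y (a2 i)"
    unfolding Dset_def induced_edges_def by blast
  have "v \<in> Y2 \<and> E u v" using pq sym[of p q] by (auto simp: doubleton_eq_iff)
  moreover have "E (c u i) v" using sub not_both[OF u i] unfolding adjY2_def c_def by auto
  ultimately show "v \<in> Y2 \<and> E u v \<and> E (c u i) v" by blast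
next
  assume a: "v \<in> Y2 \<and> E u v \<and> E (c u i) v"
  have "{u,v} \<in> induced_edges Y2 E" using a u unfolding induced_edges_def by blast
  moreover have "{u,v} \<subseteq> adjY2 Y E y (a1 i) \<or> {u,v} \<subseteq> adjY2 Y E y (a2 i)"
    using a u c_props(1)[OF u i] unfolding adjY2_def c_def by (auto split: if_splits)
  ultimately show "{u, v} \<in> Dset Y E y (a1 i) (a2 i)" unfolding Dset_def by blast
qed

abbreviation "tt i \<equiv> tperm Y E y (a1 i) (a2 i)"

lemma tt_props: assumes u: "u \<in> Y2" and i: "i \<in> {1..s}"
  shows "tt i u \<in> Y2" "E u (tt i u)" "E (c u i) (tt i u)"
    "w \<in> Y \<Longrightarrow> E (c u i) w \<Longrightarrow> E u w \<Longrightarrow> w = tt i u"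
proof -
  have e: "E (c u i) u" using c_props(1)[OF u i] .
  obtain v where v: "v \<in> Y" "E (c u i) v" "E u v" using tri_ex[OF e] by blast
  have vY2: "v \<in> Y2" using cn_Y2[OF u i v] .
  have uniq: "\<And>w. w \<in> Y \<Longrightarrow> E (c u i) w \<Longrightarrow> E u w \<Longrightarrow> w = v"
    using tri_unique[OF e] v by blast
  have "tt i u = (THE v. {u, v} \<in> Dset Y E y (a1 i) (a2 i))"
    using u unfolding tperm_def by simp
  also have "\<dots> = v"
  proof (rule the_equality)
    show "{u, v} \<in> Dset Y E y (a1 i) (a2 i)" using Dset_iff[OF u i] vY2 v by auto
    fix w assume "{u, w} \<in> Dset Y E y (a1 i) (a2 i)"
    then have "w \<in> Y2 \<and> E u w \<and> E (c u i) w" using Dset_iff[OF u i] by auto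
    thus "w = v" using uniq Y2D by blast
  qed
  finally have tv: "tt i u = v" .
  show "tt i u \<in> Y2" "E u (tt i u)" "E (c u i) (tt i u)" using tv vY2 v by auto
  show "w \<in> Y \<Longrightarrow> E (c u i) w \<Longrightarrow> E u w \<Longrightarrow> w = tt i u" using uniq tv by auto
qed

lemma tt_common: assumes u: "u \<in> Y2" and i: "i \<in> {1..s}" and w: "w \<in> Y" "E u w" "E (tt i u) w"
  shows "w = c u i"
proof -
  have "c u i \<in> Y" using c_props(3)[OF u i] Y1D by blast
  moreover have "E u (c u i)" using c_props(1)[OF u i] sym by blast
  moreover have "E (tt i u) (c u i)" using tt_props(3)[OF u i] sym by blast
  ultimately show ?thesis using tri_unique[OF tt_props(2)[OF u i] w] by blast
qed

lemma tt_side: assumes u: "u \<in> Y2" and i: "i \<in> {1..s}" and m: "m \<in> {1..s}"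
  shows "E (a1 m) (tt i u) \<longleftrightarrow> (if m = i then E (a1 m) u else \<not> E (a1 m) u)"
proof (cases "m = i")
  case True
  then show ?thesis using c_same[OF u tt_props(1)[OF u i] i] tt_props(3)[OF u i] by auto
next
  case False
  have "\<not> E (c u m) (tt i u)"
  proof
    assume "E (c u m) (tt i u)"
    moreover have "E u (c u m)" using c_props(1)[OF u m] sym by blast
    moreover have "c u m \<in> Y" using c_props(3)[OF u m] Y1D by blast
    ultimately have "c u m = c u i" using tt_common[OF u i, of "c u m"] sym[of "c u m" "tt i u"] by blast
    thus False using c_inj[OF u m i False] by simp
  qed
  then show ?thesis using c_same[OF u tt_props(1)[OF u i] m] False by auto
qed

lemma tt_invol: assumes u: "u \<in> Y2" and i: "i \<in> {1..s}"
  shows "tt i (tt i u) = u"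
proof -
  let ?v = "tt i u"
  have v: "?v \<in> Y2" using tt_props[OF u i] by auto
  have "c ?v i = c u i" using c_eq[OF v u i] tt_side[OF u i i] by auto
  then have "E (c ?v i) u" using c_props(1)[OF u i] by simp
  moreover have "E ?v u" using tt_props(2)[OF u i] sym[of u "tt i u"] by auto
  ultimately show ?thesis using tt_props(4)[OF v i] Y2D[OF u] by auto
qed

lemma tt_distinct: assumes u: "u \<in> Y2" and i: "i \<in> {1..s}" and j: "j \<in> {1..s}" and ij: "i \<noteq> j"
  shows "tt i u \<noteq> tt j u"
  using tt_side[OF u i i] tt_side[OF u j i] ij by auto

lemma tt_nbrs: assumes u: "u \<in> Y2" and w: "w \<in> Y2" "E u w"
  shows "\<exists>k\<in>{1..s}. w = tt k u"
proof -
  have "(\<lambda>k. tt k u) ` {1..s} \<subseteq> {w \<in> Y2. E u w}" using tt_props[OF u] by auto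
  moreover have "card ((\<lambda>k. tt k u) ` {1..s}) = s"
  proof -
    have "inj_on (\<lambda>k. tt k u) {1..s}" unfolding inj_on_def using tt_distinct[OF u] by blast
    thus ?thesis by (simp add: card_image)
  qed
  moreover have "finite {w \<in> Y2. E u w}" using finY by (auto simp: nbhd2_def)
  ultimately have "(\<lambda>k. tt k u) ` {1..s} = {w \<in> Y2. E u w}"
    using Y2_nbr[OF u] by (intro card_subset_eq) auto
  thus ?thesis using w by blast
qed

lemma no_tri: assumes u: "u \<in> Y2" and i: "i \<in> {1..s}" and w: "w \<in> Y2" "E u w" "E (tt i u) w"
  shows False
  using tt_common[OF u i _ w(2,3)] w(1) Y2D c_props(3)[OF u i] Y12 by auto

lemma tt_side2: assumes u: "u \<in> Y2" and i: "i \<in> {1..s}" and j: "j \<in> {1..s}" and m: "m \<in> {1..s}"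
  and ij: "i \<noteq> j"
  shows "E (a1 m) (tt i (tt j u)) \<longleftrightarrow> (if m = i \<or> m = j then \<not> E (a1 m) u else E (a1 m) u)"
  using tt_side[OF tt_props(1)[OF u j] i m] tt_side[OF u j m] ij by auto

lemma Y2_nbhd1_split: assumes u: "u \<in> Y2" and z: "z \<in> nbhd1 Y E u"
  shows "z \<in> Y1 \<or> z \<in> Y2"
proof -
  have "z \<in> Y" "E u z" using z by (auto simp: nbhd1_def)
  moreover have "z \<noteq> y" using Y2D[OF u] \<open>E u z\<close> sym[of u z] by auto
  ultimately show ?thesis using classify by blast
qed

lemma tt_comm: assumes u: "u \<in> Y2" and i: "i \<in> {1..s}" and j: "j \<in> {1..s}" and ij: "i \<noteq> j"
  shows "tt i (tt j u) = tt j (tt i u)"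
proof -
  define v where "v = tt j u"
  define w where "w = tt i v"
  have v: "v \<in> Y2" "E u v" using tt_props[OF u j] v_def by auto
  have w: "w \<in> Y2" "E v w" using tt_props[OF v(1) i] w_def by auto
  have sdw: "\<And>m. m \<in> {1..s} \<Longrightarrow> E (a1 m) w \<longleftrightarrow> (if m = i \<or> m = j then \<not> E (a1 m) u else E (a1 m) u)"
    using tt_side2[OF u i j _ ij] unfolding w_def v_def by blast
  have wu: "w \<noteq> u" using sdw[OF i] by auto
  have nuw: "\<not> E u w"
  proof
    assume "E u w"
    thus False using no_tri[OF u j w(1)] w(2) v_def by auto
  qed
  have uY: "u \<in> Y" "w \<in> Y" "v \<in> Y" using Y2D u w v by auto
  have wn2: "w \<in> nbhd2 Y E u" unfolding nbhd2_def using uY wu nuw v(2) w(2) by auto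
  define C where "C = {z \<in> nbhd1 Y E u. E w z}"
  have cardC: "card C = s" using mu[OF uY(1) wn2] C_def by simp
  define C1 where "C1 = C \<inter> Y1"
  define C2 where "C2 = C \<inter> Y2"
  have Cun: "C = C1 \<union> C2" using Y2_nbhd1_split[OF u] unfolding C_def C1_def C2_def by blast
  have fC: "finite C" using finY unfolding C_def nbhd1_def by auto
  have C1eq: "C1 = c u ` ({1..s} - {i,j})"
  proof
    show "C1 \<subseteq> c u ` ({1..s} - {i,j})"
    proof
      fix z assume z: "z \<in> C1"
      then have zY1: "z \<in> Y1" and euz: "E u z" and ewz: "E w z" unfolding C1_def C_def nbhd1_def by auto
      obtain m where m: "m \<in> {1..s}" "z = c u m" using Y1_nbr_c[OF u zY1 euz] by blast
      have "E (c u m) w" using ewz m(2) sym[of w z] by simp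
      then have "E (a1 m) w \<longleftrightarrow> E (a1 m) u" using c_same[OF u w(1) m(1)] by simp
      then have "m \<notin> {i,j}" using sdw[OF m(1)] by auto
      thus "z \<in> c u ` ({1..s} - {i,j})" using m by blast
    qed
  next
    show "c u ` ({1..s} - {i,j}) \<subseteq> C1"
    proof
      fix z assume "z \<in> c u ` ({1..s} - {i,j})"
      then obtain m where m: "m \<in> {1..s}" "m \<noteq> i" "m \<noteq> j" "z = c u m" by blast
      have "E (a1 m) w \<longleftrightarrow> E (a1 m) u" using sdw[OF m(1)] m by simp
      then have "E (c u m) w" using c_same[OF u w(1) m(1)] by simp
      moreover have "E u (c u m)" using c_props(1)[OF u m(1)] sym by blast
      moreover have "c u m \<in> Y1" using c_props(3)[OF u m(1)] .
      ultimately show "z \<in> C1" unfolding C1_def C_def nbhd1_def using m(4) Y1D sym[of "c u m" w] by auto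
    qed
  qed
  have cardC1: "card C1 = s - 2"
  proof -
    have "inj_on (c u) ({1..s} - {i,j})" using c_inj_on[OF u] by (rule inj_on_subset) auto
    then have "card C1 = card ({1..s} - {i,j})" unfolding C1eq by (rule card_image)
    also have "\<dots> = s - 2" using i j ij by (subst card_Diff_subset) auto
    finally show ?thesis .
  qed
  have "C1 \<inter> C2 = {}" unfolding C1_def C2_def using Y12 by blast
  then have "card C = card C1 + card C2" unfolding Cun
    by (rule card_Un_disjoint[rotated 2]) (use fC Cun in auto)
  moreover have "2 \<le> s" using i j ij by auto
  ultimately have cardC2: "card C2 = 2" using cardC cardC1 by linarith
  have vC2: "v \<in> C2" unfolding C2_def C_def nbhd1_def using v uY w(2) sym[of v w] by auto
  obtain x where x: "x \<in> C2" "x \<noteq> v"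
  proof -
    have "\<not> C2 \<subseteq> {v}"
    proof
      assume "C2 \<subseteq> {v}"
      then have "card C2 \<le> card {v}" by (intro card_mono) auto
      thus False using cardC2 by simp
    qed
    thus ?thesis using that by blast
  qed
  have xY2: "x \<in> Y2" and eux: "E u x" and ewx: "E w x" using x unfolding C2_def C_def nbhd1_def by auto
  obtain k where k: "k \<in> {1..s}" "x = tt k u" using tt_nbrs[OF u xY2 eux] by blast
  have kj: "k \<noteq> j" using x(2) k v_def by auto
  have "E x w" using ewx sym by blast
  then obtain m where m: "m \<in> {1..s}" "w = tt m x" using tt_nbrs[OF xY2 w(1)] by blast
  have mk: "m \<noteq> k" using wu m k tt_invol[OF u k(1)] by auto
  have sw2: "\<And>n. n \<in> {1..s} \<Longrightarrow> E (a1 n) w \<longleftrightarrow> (if n = m \<or> n = k then \<not> E (a1 n) u else E (a1 n) u)"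
    using tt_side2[OF u m(1) k(1) _ mk] m(2) k(2) by blast
  have eqv: "\<And>n. n \<in> {1..s} \<Longrightarrow> (n = m \<or> n = k) \<longleftrightarrow> (n = i \<or> n = j)"
  proof -
    fix n assume n: "n \<in> {1..s}"
    show "(n = m \<or> n = k) \<longleftrightarrow> (n = i \<or> n = j)"
      using sw2[OF n] sdw[OF n] by (cases "n = m \<or> n = k"; cases "n = i \<or> n = j") auto
  qed
  have "k = i" using eqv[OF k(1)] kj by auto
  moreover have "m = j" using eqv[OF m(1)] mk \<open>k = i\<close> by auto
  ultimately show ?thesis using m(2) k(2) unfolding w_def v_def by simp
qed

lemma same_side: assumes u: "u \<in> Y2" and w: "w \<in> Y2" and wu: "u \<noteq> w" and nuw: "\<not> E u w"
  and nc: "\<And>x. x \<in> Y2 \<Longrightarrow> E u x \<Longrightarrow> E x w \<Longrightarrow> False" and m: "m \<in> {1..s}"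
  shows "E (a1 m) w \<longleftrightarrow> E (a1 m) u"
proof -
  have uY: "u \<in> Y" "w \<in> Y" using Y2D u w by auto
  obtain x where x: "x \<in> Y" "E u x" "E x w" using diam uY wu nuw unfolding diam_le2_def by blast
  have wn2: "w \<in> nbhd2 Y E u" unfolding nbhd2_def using uY wu nuw x by auto
  define C where "C = {z \<in> nbhd1 Y E u. E w z}"
  have cardC: "card C = s" using mu[OF uY(1) wn2] C_def by simp
  have sub: "C \<subseteq> c u ` {1..s}"
  proof
    fix z assume z: "z \<in> C"
    then have zz: "z \<in> nbhd1 Y E u" "E u z" "E w z" unfolding C_def nbhd1_def by auto
    have "z \<notin> Y2" using nc[of z] zz sym[of w z] by auto
    then have "z \<in> Y1" using Y2_nbhd1_split[OF u zz(1)] by auto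
    thus "z \<in> c u ` {1..s}" using Y1_nbr_c[OF u _ zz(2)] by blast
  qed
  have "card (c u ` {1..s}) = s" using c_inj_on[OF u] by (simp add: card_image)
  then have "C = c u ` {1..s}" using sub cardC by (intro card_seteq) simp_all
  then have "c u m \<in> C" using m by blast
  then have "E (c u m) w" unfolding C_def using sym[of w "c u m"] by auto
  thus ?thesis using c_same[OF u w m] by simp
qed

definition ev :: "nat list \<Rightarrow> 'a \<Rightarrow> 'a" where "ev ks u = foldr (\<lambda>k x. tt k x) ks u"

lemma ev_simps[simp]: "ev [] u = u" "ev (k # ks) u = tt k (ev ks u)"
  by (simp_all add: ev_def)

lemma ev_Y2: "u \<in> Y2 \<Longrightarrow> set ks \<subseteq> {1..s} \<Longrightarrow> ev ks u \<in> Y2"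
  by (induction ks) (auto simp: tt_props(1))

lemma trans_ex: assumes u: "u \<in> Y2" and w: "w \<in> Y2" and s2: "2 \<le> s"
  shows "\<exists>ks. set ks \<subseteq> {1..s} \<and> ev ks u = w"
proof (rule ccontr)
  assume nex: "\<not> (\<exists>ks. set ks \<subseteq> {1..s} \<and> ev ks u = w)"
  have o1: "(1::nat) \<in> {1..s}" and o2: "(2::nat) \<in> {1..s}" using s2 by auto
  have A: "\<And>ks v m. set ks \<subseteq> {1..s} \<Longrightarrow> v = ev ks u \<Longrightarrow> m \<in> {1..s} \<Longrightarrow> E (a1 m) w \<longleftrightarrow> E (a1 m) v"
  proof -
    fix ks v m assume ks: "set ks \<subseteq> {1..s}" and vd: "v = ev ks u" and m: "m \<in> {1..s}"
    have v: "v \<in> Y2" using ev_Y2[OF u ks] vd by simp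
    show "E (a1 m) w \<longleftrightarrow> E (a1 m) v"
    proof (rule same_side[OF v w _ _ _ m])
      show "v \<noteq> w" using nex ks vd by blast
      show "\<not> E v w"
      proof
        assume "E v w"
        then obtain k where "k \<in> {1..s}" "w = tt k v" using tt_nbrs[OF v w] by blast
        thus False using nex[unfolded not_ex, rule_format, of "k # ks"] ks vd by auto
      qed
      fix x assume x: "x \<in> Y2" "E v x" "E x w"
      obtain k where k: "k \<in> {1..s}" "x = tt k v" using tt_nbrs[OF v x(1,2)] by blast
      obtain k' where k': "k' \<in> {1..s}" "w = tt k' x" using tt_nbrs[OF x(1) w x(3)] by blast
      show False using nex[unfolded not_ex, rule_format, of "k' # k # ks"] ks vd k k' by auto
    qed
  qed
  have "E (a1 2) w \<longleftrightarrow> E (a1 2) u" using A[of "[]" u 2] o2 by simp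
  moreover have "E (a1 2) w \<longleftrightarrow> E (a1 2) (tt 1 u)" using A[of "[1]" "tt 1 u" 2] o1 o2 by simp
  moreover have "E (a1 2) (tt 1 u) \<longleftrightarrow> \<not> E (a1 2) u" using tt_side[OF u o1 o2] by simp
  ultimately show False by simp
qed

end

context EG
begin

abbreviation "G \<equiv> BijGroup Y2"
abbreviation "T \<equiv> generate G (tt ` {1..s})"

lemma finY2: "finite Y2" by (rule finite_subset[OF _ finY]) (auto simp: nbhd2_def)

lemma tt_Bij: assumes i: "i \<in> {1..s}" shows "tt i \<in> Bij Y2"
proof -
  have e: "tt i \<in> extensional Y2" unfolding tperm_def by (rule restrict_extensional)
  have "bij_betw (tt i) Y2 Y2"
  proof (rule bij_betw_byWitness[where f'="tt i"])
    show "\<forall>a\<in>Y2. tt i (tt i a) = a" using tt_invol[OF _ i] by blast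
    show "\<forall>a\<in>Y2. tt i (tt i a) = a" using tt_invol[OF _ i] by blast
    show "tt i ` Y2 \<subseteq> Y2" using tt_props(1)[OF _ i] by blast
    show "tt i ` Y2 \<subseteq> Y2" using tt_props(1)[OF _ i] by blast
  qed
  thus ?thesis using e unfolding Bij_def by blast
qed

lemma G_mult: "f \<in> Bij Y2 \<Longrightarrow> g \<in> Bij Y2 \<Longrightarrow> f \<otimes>\<^bsub>G\<^esub> g = compose Y2 f g"
  by (simp add: BijGroup_def)
lemma G_one: "\<one>\<^bsub>G\<^esub> = (\<lambda>x\<in>Y2. x)" by (simp add: BijGroup_def)
lemma G_carrier: "carrier G = Bij Y2" by (simp add: BijGroup_def)
lemma grpG: "group G" by (rule group_BijGroup)

lemma X_sub: "tt ` {1..s} \<subseteq> carrier G" using tt_Bij G_carrier by auto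

lemma X_comm: "a \<in> tt ` {1..s} \<Longrightarrow> b \<in> tt ` {1..s} \<Longrightarrow> a \<otimes>\<^bsub>G\<^esub> b = b \<otimes>\<^bsub>G\<^esub> a"
proof -
  assume a: "a \<in> tt ` {1..s}" and b: "b \<in> tt ` {1..s}"
  obtain i where i: "i \<in> {1..s}" "a = tt i" using a by (auto simp only: image_iff)
  obtain j where j: "j \<in> {1..s}" "b = tt j" using b by (auto simp only: image_iff)
  have "compose Y2 (tt i) (tt j) = compose Y2 (tt j) (tt i)"
    unfolding compose_def
  proof (rule restrict_ext)
    fix x assume x: "x \<in> Y2"
    show "tt i (tt j x) = tt j (tt i x)"
    proof (cases "i = j")
      case True then show ?thesis by simp
    next
      case False then show ?thesis using tt_comm[OF x i(1) j(1)] by simp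
    qed
  qed
  thus ?thesis using i j tt_Bij G_mult by simp
qed

lemma X_sq: "a \<in> tt ` {1..s} \<Longrightarrow> a \<otimes>\<^bsub>G\<^esub> a = \<one>\<^bsub>G\<^esub>"
proof -
  assume a: "a \<in> tt ` {1..s}"
  obtain i where i: "i \<in> {1..s}" "a = tt i" using a by (auto simp only: image_iff)
  have "compose Y2 (tt i) (tt i) = (\<lambda>x\<in>Y2. x)"
    unfolding compose_def by (rule restrict_ext) (simp add: tt_invol[OF _ i(1)])
  thus ?thesis using i tt_Bij G_mult G_one by simp
qed

lemma T_sub: "T \<subseteq> carrier G" using group.generate_incl[OF grpG X_sub] .
lemma T_Bij: "g \<in> T \<Longrightarrow> g \<in> Bij Y2" using T_sub G_carrier by auto
lemma T_comm: "g \<in> T \<Longrightarrow> h \<in> T \<Longrightarrow> g \<otimes>\<^bsub>G\<^esub> h = h \<otimes>\<^bsub>G\<^esub> g"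
  using group.gen_comm[OF grpG X_sub X_comm X_sq] by blast
lemma T_sq: "g \<in> T \<Longrightarrow> g \<otimes>\<^bsub>G\<^esub> g = \<one>\<^bsub>G\<^esub>"
  using group.gen_sq[OF grpG X_sub X_comm X_sq] by blast
lemma T_subgroup: "subgroup T G" using group.generate_is_subgroup[OF grpG X_sub] .
lemma T_eval: "g \<in> T \<Longrightarrow> h \<in> T \<Longrightarrow> u \<in> Y2 \<Longrightarrow> (g \<otimes>\<^bsub>G\<^esub> h) u = g (h u)"
  using T_Bij G_mult by (simp add: compose_def)
lemma T_Y2: "g \<in> T \<Longrightarrow> u \<in> Y2 \<Longrightarrow> g u \<in> Y2"
  using T_Bij Bij_imp_funcset by blast
lemma T_ext: "g \<in> T \<Longrightarrow> g \<in> extensional Y2"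
  using T_Bij Bij_imp_extensional by blast

definition gl :: "nat list \<Rightarrow> 'a \<Rightarrow> 'a" where
  "gl ks = foldr (\<lambda>k f. tt k \<otimes>\<^bsub>G\<^esub> f) ks \<one>\<^bsub>G\<^esub>"

lemma gl_in: "set ks \<subseteq> {1..s} \<Longrightarrow> gl ks \<in> T"
proof (induction ks)
  case Nil then show ?case by (simp add: gl_def generate.one)
next
  case (Cons k ks)
  then have "gl ks \<in> T" "tt k \<in> T" by (auto intro: generate.incl)
  then show ?case by (simp add: gl_def generate.eng)
qed

lemma gl_eval: "set ks \<subseteq> {1..s} \<Longrightarrow> u \<in> Y2 \<Longrightarrow> gl ks u = ev ks u"
proof (induction ks)
  case Nil then show ?case by (simp add: gl_def G_one)
next
  case (Cons k ks)
  then have "gl ks \<in> T" "tt k \<in> T" using gl_in by (auto intro: generate.incl)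
  then have "gl (k # ks) u = tt k (gl ks u)" using T_eval[of "tt k" "gl ks" u] Cons.prems
    by (simp add: gl_def)
  then show ?case using Cons by simp
qed

lemma s2_iff: "Y2 \<noteq> {} \<longleftrightarrow> 2 \<le> s"
proof -
  have "card Y2 = 2 * (2 * s - 2)" using cardY2 sb_eq by simp
  thus ?thesis using finY2 sb_eq(2) by (cases "Y2 = {}") auto
qed

lemma T_trans: "u \<in> Y2 \<Longrightarrow> v \<in> Y2 \<Longrightarrow> \<exists>g\<in>T. g u = v"
proof -
  assume u: "u \<in> Y2" and v: "v \<in> Y2"
  then have "2 \<le> s" using s2_iff by auto
  then obtain ks where ks: "set ks \<subseteq> {1..s}" "ev ks u = v" using trans_ex[OF u v] by blast
  thus ?thesis using gl_in[OF ks(1)] gl_eval[OF ks(1) u] by auto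
qed

lemma T_uniq: assumes g: "g \<in> T" and h: "h \<in> T" and u: "u \<in> Y2" and e: "g u = h u"
  shows "g = h"
proof -
  interpret grp: group G by (rule grpG)
  define x where "x = h \<otimes>\<^bsub>G\<^esub> g"
  have xT: "x \<in> T" unfolding x_def using g h by (rule generate.eng[rotated])
  have xu: "x u = u"
  proof -
    have "x u = h (h u)" unfolding x_def using T_eval[OF h g u] e by simp
    also have "\<dots> = (h \<otimes>\<^bsub>G\<^esub> h) u" using T_eval[OF h h u] by simp
    also have "\<dots> = u" using T_sq[OF h] u by (simp add: G_one)
    finally show ?thesis .
  qed
  have xone: "x = \<one>\<^bsub>G\<^esub>"
  proof (rule extensionalityI[OF T_ext[OF xT]])
    show "\<one>\<^bsub>G\<^esub> \<in> extensional Y2" by (simp add: G_one)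
    fix w assume w: "w \<in> Y2"
    obtain f where f: "f \<in> T" "f u = w" using T_trans[OF u w] by blast
    have "x w = (x \<otimes>\<^bsub>G\<^esub> f) u" using T_eval[OF xT f(1) u] f by simp
    also have "\<dots> = (f \<otimes>\<^bsub>G\<^esub> x) u" using T_comm[OF xT f(1)] by simp
    also have "\<dots> = w" using T_eval[OF f(1) xT u] xu f by simp
    finally show "x w = \<one>\<^bsub>G\<^esub> w" using w by (simp add: G_one)
  qed
  have gc: "g \<in> carrier G" "h \<in> carrier G" using g h T_sub by auto
  have "g = (h \<otimes>\<^bsub>G\<^esub> h) \<otimes>\<^bsub>G\<^esub> g" using T_sq[OF h] gc by simp
  also have "\<dots> = h \<otimes>\<^bsub>G\<^esub> x" unfolding x_def using gc by (simp add: grp.m_assoc)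
  also have "\<dots> = h" using xone gc by simp
  finally show ?thesis .
qed

lemma finT: "finite T"
proof -
  have "Bij Y2 \<subseteq> Pi\<^sub>E Y2 (\<lambda>_. Y2)"
  proof
    fix f assume f: "f \<in> Bij Y2"
    show "f \<in> Pi\<^sub>E Y2 (\<lambda>_. Y2)"
      using Bij_imp_extensional[OF f] Bij_imp_funcset[OF f] by (simp add: PiE_iff Pi_iff)
  qed
  moreover have "finite (Pi\<^sub>E Y2 (\<lambda>_. Y2))" using finY2 by (simp add: finite_PiE)
  ultimately show ?thesis using T_sub G_carrier finite_subset by metis
qed

lemma cardT_le: assumes u: "u \<in> Y2" shows "card T \<le> card Y2"
proof (rule card_inj_on_le[where f="\<lambda>g. g u"])
  show "inj_on (\<lambda>g. g u) T" unfolding inj_on_def using T_uniq u by blast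
  show "(\<lambda>g. g u) ` T \<subseteq> Y2" using T_Y2 u by blast
  show "finite Y2" by (rule finY2)
qed

lemma ev_flip: "distinct ks \<Longrightarrow> set ks \<subseteq> {1..s} \<Longrightarrow> u \<in> Y2 \<Longrightarrow> m \<in> {1..s} \<Longrightarrow>
  E (a1 m) (ev ks u) \<longleftrightarrow> (E (a1 m) u \<noteq> ((m \<in> set ks) \<noteq> odd (length ks)))"
proof (induction ks)
  case Nil then show ?case by simp
next
  case (Cons k ks)
  have x: "ev ks u \<in> Y2" using ev_Y2 Cons.prems by auto
  have k: "k \<in> {1..s}" using Cons.prems by auto
  have ih: "E (a1 m) (ev ks u) \<longleftrightarrow> (E (a1 m) u \<noteq> ((m \<in> set ks) \<noteq> odd (length ks)))"
    using Cons by auto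
  show ?case using tt_side[OF x k Cons.prems(4)] ih Cons.prems(1) by (cases "m = k") auto
qed

definition hh :: "nat set \<Rightarrow> 'a \<Rightarrow> 'a" where "hh R = gl (sorted_list_of_set R)"

lemma hh_in: "R \<subseteq> {1..s} \<Longrightarrow> hh R \<in> T"
  unfolding hh_def by (rule gl_in) (simp add: finite_subset)

lemma hh_flip: assumes R: "R \<subseteq> {1..s}" and u: "u \<in> Y2" and m: "m \<in> {1..s}"
  shows "E (a1 m) (hh R u) \<longleftrightarrow> (E (a1 m) u \<noteq> ((m \<in> R) \<noteq> odd (card R)))"
proof -
  have fR: "finite R" using R finite_subset by blast
  have "hh R u = ev (sorted_list_of_set R) u" unfolding hh_def using gl_eval fR R u by simp
  thus ?thesis using ev_flip[of "sorted_list_of_set R" u m] fR R u m by simp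
qed

lemma pat: assumes R: "R \<subseteq> {1..s}" and R': "R' \<subseteq> {1..s}"
  and eq: "\<And>m. m \<in> {1..s} \<Longrightarrow> ((m \<in> R) \<noteq> odd (card R)) = ((m \<in> R') \<noteq> odd (card R'))"
  shows "R = R' \<or> (R' = {1..s} - R \<and> odd (card R) \<noteq> odd (card R'))"
proof (cases "odd (card R) = odd (card R')")
  case True
  then have "\<And>m. m \<in> {1..s} \<Longrightarrow> m \<in> R \<longleftrightarrow> m \<in> R'" using eq by auto
  then have "R = R'" using R R' by blast
  thus ?thesis by simp
next
  case False
  then have "\<And>m. m \<in> {1..s} \<Longrightarrow> m \<in> R \<longleftrightarrow> m \<notin> R'" using eq by auto
  then have "R' = {1..s} - R" using R R' by blast
  thus ?thesis using False by simp
qed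

lemma pat_even: assumes R: "R \<subseteq> {1..s}" and R': "R' \<subseteq> {1..s}" and ev: "even s"
  and eq: "\<And>m. m \<in> {1..s} \<Longrightarrow> ((m \<in> R) \<noteq> odd (card R)) = ((m \<in> R') \<noteq> odd (card R'))"
  shows "R = R'"
proof -
  { assume R'd: "R' = {1..s} - R" and par: "odd (card R) \<noteq> odd (card R')"
    have "card R + card R' = card (R \<union> R')" using R'd finite_subset[OF R]
      by (subst card_Un_disjoint) auto
    also have "R \<union> R' = {1..s}" using R'd R by blast
    finally have "card R + card R' = s" by simp
    then have False using ev par by (metis even_add)
  }
  thus ?thesis using pat[OF R R' eq] by blast
qed

lemma hh_pat: assumes R: "R \<subseteq> {1..s}" and R': "R' \<subseteq> {1..s}" and u: "u \<in> Y2"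
  and e: "hh R = hh R'" and m: "m \<in> {1..s}"
  shows "((m \<in> R) \<noteq> odd (card R)) = ((m \<in> R') \<noteq> odd (card R'))"
  using hh_flip[OF R u m] hh_flip[OF R' u m] e by auto

lemma cardT_ge: assumes u: "u \<in> Y2" shows "2 ^ (s - 1) \<le> card T"
proof -
  have sub: "Pow {1..s-1} \<subseteq> Pow {1..s}" by (rule Pow_mono) auto
  have "inj_on hh (Pow {1..s-1})"
  proof (rule inj_onI)
    fix R R' assume RR: "R \<in> Pow {1..s-1}" "R' \<in> Pow {1..s-1}" "hh R = hh R'"
    have R: "R \<subseteq> {1..s}" using RR sub by blast
    have R': "R' \<subseteq> {1..s}" using RR sub by blast
    have sR: "s \<notin> R" "s \<notin> R'" using RR sb_eq(2) by auto
    have ss: "s \<in> {1..s}" using sb_eq(2) by auto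
    have eq: "\<And>m. m \<in> {1..s} \<Longrightarrow> ((m \<in> R) \<noteq> odd (card R)) = ((m \<in> R') \<noteq> odd (card R'))"
      using hh_pat[OF R R' u RR(3)] by blast
    show "R = R'" using pat[OF R R' eq] sR ss by blast
  qed
  then have "card (hh ` Pow {1..s-1}) = 2 ^ (s - 1)" by (simp add: card_image card_Pow)
  moreover have "hh ` Pow {1..s-1} \<subseteq> T" using hh_in sub by blast
  ultimately show ?thesis using card_mono[OF finT] by metis
qed

lemma cardT_ge_even: assumes u: "u \<in> Y2" and ev: "even s" shows "2 ^ s \<le> card T"
proof -
  have "inj_on hh (Pow {1..s})"
  proof (rule inj_onI)
    fix R R' assume RR: "R \<in> Pow {1..s}" "R' \<in> Pow {1..s}" "hh R = hh R'"
    have R: "R \<subseteq> {1..s}" and R': "R' \<subseteq> {1..s}" using RR by auto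
    have eq: "\<And>m. m \<in> {1..s} \<Longrightarrow> ((m \<in> R) \<noteq> odd (card R)) = ((m \<in> R') \<noteq> odd (card R'))"
      using hh_pat[OF R R' u RR(3)] by blast
    show "R = R'" using pat_even[OF R R' ev eq] .
  qed
  then have "card (hh ` Pow {1..s}) = 2 ^ s" by (simp add: card_image card_Pow)
  moreover have "hh ` Pow {1..s} \<subseteq> T" using hh_in by blast
  ultimately show ?thesis using card_mono[OF finT] by metis
qed

end


lemma pow_big: "6 \<le> n \<Longrightarrow> 4 * n - 4 < (2::nat) ^ (n - 1)"
proof (induction n rule: nat_induct_at_least)
  case base then show ?case by simp
next
  case (Suc n)
  have e: "(2::nat) ^ (Suc n - 1) = 2 * 2 ^ (n - 1)" using Suc.hyps by (cases n) auto
  have "4 * n - 4 < (2::nat) ^ (n - 1)" using Suc.IH .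
  then have "4 * Suc n - 4 < 2 * (2::nat) ^ (n - 1)" using Suc.hyps by arith
  then show ?case using e by simp
qed

lemma arith_s: assumes "2 \<le> s" "(2::nat) ^ (s - 1) \<le> 4 * s - 4" "even s \<longrightarrow> (2::nat) ^ s \<le> 4 * s - 4"
  shows "s = 2 \<or> s = 3 \<or> s = 5"
proof -
  have "s \<le> 5" using pow_big[of s] assms(2) by (cases "6 \<le> s") auto
  moreover have "s \<noteq> 4" using assms(3) by auto
  ultimately show ?thesis using assms(1) by auto
qed

lemma foldr_comp: "foldr (\<circ>) (map f ks) id u = foldr f ks u"
  by (induction ks) auto

context EG
begin

lemma hh_inj: assumes u: "u \<in> Y2" shows "inj_on hh (Pow {1..s-1})"
proof (rule inj_onI)
  have sub: "Pow {1..s-1} \<subseteq> Pow {1..s}" by (rule Pow_mono) auto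
  fix R R' assume RR: "R \<in> Pow {1..s-1}" "R' \<in> Pow {1..s-1}" "hh R = hh R'"
  have R: "R \<subseteq> {1..s}" using RR sub by blast
  have R': "R' \<subseteq> {1..s}" using RR sub by blast
  have sR: "s \<notin> R" "s \<notin> R'" using RR sb_eq(2) by auto
  have ss: "s \<in> {1..s}" using sb_eq(2) by auto
  have eq: "\<And>m. m \<in> {1..s} \<Longrightarrow> ((m \<in> R) \<noteq> odd (card R)) = ((m \<in> R') \<noteq> odd (card R'))"
    using hh_pat[OF R R' u RR(3)] by blast
  show "R = R'" using pat[OF R R' eq] sR ss by blast
qed

lemma rank_case: assumes u0: "u0 \<in> Y2" and cT: "card T \<le> 2 ^ (s - 1)" and u: "u \<in> Y2"
  shows "tt s u = foldr (\<circ>) (map tt [1..<s]) id u"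
proof -
  have sub: "Pow {1..s-1} \<subseteq> Pow {1..s}" by (rule Pow_mono) auto
  have cimg: "card (hh ` Pow {1..s-1}) = 2 ^ (s - 1)"
    using hh_inj[OF u0] by (simp add: card_image card_Pow)
  have isub: "hh ` Pow {1..s-1} \<subseteq> T" using hh_in sub by blast
  have Teq: "hh ` Pow {1..s-1} = T" using card_seteq[OF finT isub] cimg cT by simp
  have ss: "s \<in> {1..s}" using sb_eq(2) by auto
  have "tt s \<in> T" using ss by (intro generate.incl) blast
  then obtain R where R0: "R \<in> Pow {1..s-1}" and tR: "tt s = hh R" using Teq by blast
  have R: "R \<subseteq> {1..s}" using R0 sub by blast
  have sR: "s \<notin> R" using R0 sb_eq(2) by auto
  have S: "{s} \<subseteq> {1..s}" using ss by blast
  have eq: "\<And>m. m \<in> {1..s} \<Longrightarrow> ((m \<in> {s}) \<noteq> odd (card {s})) = ((m \<in> R) \<noteq> odd (card R))"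
  proof -
    fix m assume m: "m \<in> {1..s}"
    have "E (a1 m) (tt s u0) \<longleftrightarrow> E (a1 m) (hh R u0)" using tR by simp
    then show "((m \<in> {s}) \<noteq> odd (card {s})) = ((m \<in> R) \<noteq> odd (card R))"
      using tt_side[OF u0 ss m] hh_flip[OF R u0 m] by (cases "m = s") auto
  qed
  have "R = {1..s} - {s}" using pat[OF S R eq] sR by blast
  also have "\<dots> = {1..<s}" by auto
  finally have Req: "R = {1..<s}" .
  have "tt s u = hh R u" using tR by simp
  also have "\<dots> = ev [1..<s] u"
  proof -
    have "set [1..<s] \<subseteq> {1..s}" by (auto simp: subset_iff)
    thus ?thesis unfolding hh_def Req using gl_eval[of "[1..<s]" u] u by simp
  qed
  also have "\<dots> = foldr (\<circ>) (map tt [1..<s]) id u" unfolding ev_def foldr_comp by simp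
  finally show ?thesis .
qed

end

theorem lemma2:
  fixes Y :: "'a set" and E :: "'a \<Rightarrow> 'a \<Rightarrow> bool" and t s sb :: nat
    and y :: 'a and a1 a2 :: "nat \<Rightarrow> 'a"
  assumes ext: "extensible Y E t s sb"
    and t1: "t = 1"
    and yY: "y \<in> Y"
    and lab: "induced_edges (nbhd1 Y E y) E = {{a1 i, a2 i} | i. i \<in> {1..s}}"
    and lab_inj: "inj_on (\<lambda>i. {a1 i, a2 i}) {1..s}"
  shows
    "let Y2 = nbhd2 Y E y;
         tt = (\<lambda>i. tperm Y E y (a1 i) (a2 i));
         G = BijGroup Y2;
         T = generate G (tt ` {1..s});
         TG = G\<lparr>carrier := T\<rparr>;
         r = group_rank TG
     in comm_group TG
        \<and> (\<forall>g \<in> T. g \<otimes>\<^bsub>G\<^esub> g = \<one>\<^bsub>G\<^esub>)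
        \<and> (\<forall>u \<in> Y2. \<forall>v \<in> Y2. \<exists>!g. g \<in> T \<and> g u = v)
        \<and> r \<ge> s - 1
        \<and> (r = s - 1 \<longrightarrow> (\<forall>u \<in> Y2. tt s u = foldr (\<circ>) (map tt [1..<s]) id u))
        \<and> (t, s, sb) \<in> {(1,1,0), (1,2,2), (1,3,4), (1,5,8)}"
proof -
  interpret EG Y E t s sb y a1 a2 using ext t1 yY lab lab_inj by unfold_locales
  define TG where "TG = G\<lparr>carrier := T\<rparr>"
  have grpTG: "group TG" unfolding TG_def by (rule subgroup.subgroup_is_group[OF T_subgroup grpG])
  have cTG: "comm_group TG"
    by (rule group.group_comm_groupI[OF grpTG]) (simp add: TG_def T_comm)
  have sqTG: "\<And>x. x \<in> carrier TG \<Longrightarrow> x \<otimes>\<^bsub>TG\<^esub> x = \<one>\<^bsub>TG\<^esub>"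
    by (simp add: TG_def T_sq)
  have genTG: "generate TG (carrier TG) = carrier TG"
  proof
    show "generate TG (carrier TG) \<subseteq> carrier TG" by (rule group.generate_incl[OF grpTG]) simp
    show "carrier TG \<subseteq> generate TG (carrier TG)" by (auto intro: generate.incl)
  qed
  define r where "r = group_rank TG"
  have "\<exists>S. S \<subseteq> carrier TG \<and> finite S \<and> card S = r \<and> generate TG S = carrier TG"
    unfolding r_def group_rank_def
  proof (rule LeastI_ex)
    show "\<exists>n S. S \<subseteq> carrier TG \<and> finite S \<and> card S = n \<and> generate TG S = carrier TG"
      using genTG finT by (auto simp: TG_def)
  qed
  then obtain S where S: "S \<subseteq> carrier TG" "finite S" "card S = r" "generate TG S = carrier TG" by blast
  have cT_r: "card T \<le> 2 ^ r"
    using comm_group.gen_card[OF cTG sqTG S(2) S(1)] S(3,4) by (simp add: TG_def)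
  have regular: "\<forall>u \<in> Y2. \<forall>v \<in> Y2. \<exists>!g. g \<in> T \<and> g u = v"
    using T_trans T_uniq by blast
  have sbv: "sb = 2 * s - 2" "1 \<le> s" using sb_eq by auto
  have rank: "r \<ge> s - 1"
  proof (cases "Y2 = {}")
    case True then have "s \<le> 1" using s2_iff by auto
    then show ?thesis by simp
  next
    case False then obtain u0 where u0: "u0 \<in> Y2" by blast
    have "(2::nat) ^ (s - 1) \<le> 2 ^ r" using cardT_ge[OF u0] cT_r by linarith
    then show ?thesis by (simp add: power_le_imp_le_exp)
  qed
  have rk: "r = s - 1 \<longrightarrow> (\<forall>u \<in> Y2. tt s u = foldr (\<circ>) (map tt [1..<s]) id u)"
  proof (intro impI ballI)
    fix u assume r: "r = s - 1" and u: "u \<in> Y2"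
    show "tt s u = foldr (\<circ>) (map tt [1..<s]) id u"
      using rank_case[OF u _ u] cT_r r by simp
  qed
  have par: "(t, s, sb) \<in> {(1,1,0), (1,2,2), (1,3,4), (1,5,8)}"
  proof (cases "Y2 = {}")
    case True then have "s = 1" using s2_iff sbv by auto
    then show ?thesis using t1 sbv by simp
  next
    case False then obtain u0 where u0: "u0 \<in> Y2" by blast
    have s2: "2 \<le> s" using s2_iff False by auto
    have cY: "card Y2 = 4 * s - 4" using cardY2 sbv by simp
    have "(2::nat) ^ (s - 1) \<le> 4 * s - 4" using cardT_ge[OF u0] cardT_le[OF u0] cY by linarith
    moreover have "even s \<longrightarrow> (2::nat) ^ s \<le> 4 * s - 4"
      using cardT_ge_even[OF u0] cardT_le[OF u0] cY by auto
    ultimately have "s = 2 \<or> s = 3 \<or> s = 5" using arith_s s2 by blast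
    then show ?thesis using t1 sbv by auto
  qed
  have A: "\<forall>g\<in>T. g \<otimes>\<^bsub>G\<^esub> g = \<one>\<^bsub>G\<^esub>" using T_sq by blast
  show ?thesis
    unfolding Let_def TG_def[symmetric] r_def[symmetric]
    by (intro conjI cTG A regular rank rk par)
qed

end
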